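(* For any $w>0$ and $\rho\ge 2w$, there exists a partition of a disk of radius $\rho$ in $\mathbb{R}^2$ into convex cells such that each cell has diameter at most $8w$ and area at least $w^2/8$. *)

theory Defs
  imports "HOL-Analysis.Analysis"
begin

definition convex_cell_partition :: "(real^2) set set \<Rightarrow> (real^2) set \<Rightarrow> bool" where
  "convex_cell_partition P S \<longleftrightarrow>
     finite P \<and> \<Union>P = S \<and>
     (\<forall>C\<in>P. C \<noteq> {} \<and> convex C \<and> compact C) \<and>
     (\<forall>C\<in>P. \<forall>D\<in>P. C \<noteq> D \<longrightarrow> interior C \<inter> interior D = {})"

end

theory Submission
  imports Defs
begin

theorem lemmaC1:
  fixes w \<rho> :: real and c :: "real^2"
  assumes "w > 0" and "\<rho> \<ge> 2 * w"
  shows "\<exists>P. convex_cell_partition P (cball c \<rho>) \<and>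
             (\<forall>C\<in>P. diameter C \<le> 8 * w \<and> measure lebesgue C \<ge> w\<^sup>2 / 8)"
proof -
  define D where "D = cball c \<rho>"
  have "seq_compact D" unfolding D_def by (simp add: compact_imp_seq_compact)
  from seq_compact_imp_totally_bounded[OF this, rule_format, of "2*w"] assms(1)
  obtain Y where Y: "finite Y" "Y \<subseteq> D" "D \<subseteq> (\<Union>y\<in>Y. ball y (2*w))" by auto
  define F where "F = {S. S \<subseteq> Y \<and> (\<forall>x\<in>S. \<forall>x'\<in>S. x \<noteq> x' \<longrightarrow> dist x x' \<ge> 2*w)}"
  have "finite F" unfolding F_def using Y(1) by (auto intro: finite_subset[of _ "Pow Y"])
  moreover have "{} \<in> F" unfolding F_def by auto
  ultimately obtain X where X: "X \<in> F" and Xmax: "\<And>S. S \<in> F \<Longrightarrow> X \<subseteq> S \<Longrightarrow> X = S"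
    using finite_has_maximal[of F] by blast
  have XY: "X \<subseteq> Y" and Xsep: "\<And>x x'. x \<in> X \<Longrightarrow> x' \<in> X \<Longrightarrow> x \<noteq> x' \<Longrightarrow> dist x x' \<ge> 2*w"
    using X unfolding F_def by auto
  have finX: "finite X" using XY Y(1) finite_subset by blast
  have XD: "X \<subseteq> D" using XY Y(2) by blast
  have near: "\<exists>x\<in>X. dist y x < 2*w" if "y \<in> Y" for y
  proof (rule ccontr)
    assume nn: "\<not> ?thesis"
    hence "insert y X \<in> F" using X that assms(1) unfolding F_def
      by (auto simp: dist_commute)
    moreover have "y \<notin> X" using nn assms(1) by force
    ultimately show False using Xmax[of "insert y X"] by blast
  qed
  have net: "\<exists>x\<in>X. dist p x < 4*w" if pD: "p \<in> D" for p
  proof -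
    obtain y where "y \<in> Y" "dist y p < 2*w" using subsetD[OF Y(3) pD] by auto
    moreover obtain x where "x \<in> X" "dist y x < 2*w" using near[OF \<open>y \<in> Y\<close>] by blast
    moreover have "dist p x \<le> dist p y + dist y x" by (rule dist_triangle)
    moreover have "dist p y = dist y p" by (rule dist_commute)
    ultimately have "dist p x < 4*w" by linarith
    thus ?thesis using \<open>x \<in> X\<close> by blast
  qed
  define cell where "cell x = {p \<in> D. \<forall>x'\<in>X. dist p x \<le> dist p x'}" for x
  define P where "P = cell ` X"
  have hs: "{p. dist p x \<le> dist p x'} = {p. inner (2 *\<^sub>R (x' - x)) p \<le> norm x' ^ 2 - norm x ^ 2}"
    for x x' :: "real^2"
  proof -
    have "dist p x \<le> dist p x' \<longleftrightarrow> (dist p x)^2 \<le> (dist p x')^2" for p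
      by (simp add: power_mono_iff)
    moreover have "(dist p y)^2 = norm p ^2 - 2 * inner p y + norm y ^2" for p y :: "real^2"
      by (simp add: dist_norm power2_norm_eq_inner inner_diff_left inner_diff_right inner_commute)
    ultimately show ?thesis by (auto simp: inner_diff_left inner_diff_right inner_commute algebra_simps)
  qed
  have cell_eq: "cell x = D \<inter> (\<Inter>x'\<in>X. {p. dist p x \<le> dist p x'})" for x
    unfolding cell_def by auto
  have convex: "convex (cell x)" for x
    unfolding cell_eq hs D_def
    by (intro convex_Int convex_INT convex_halfspace_le) simp_all
  have closed: "closed (cell x)" for x
    unfolding cell_eq D_def
    by (intro closed_Int closed_INT ballI closed_Collect_le continuous_on_dist continuous_on_id continuous_on_const) simp
  have compact: "compact (cell x)" for x
  proof -
    have "bounded (cell x)" by (rule bounded_subset[of "cball c \<rho>"]) (auto simp: cell_def D_def)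
    thus ?thesis using closed[of x] compact_eq_bounded_closed by blast
  qed
  have xin: "x \<in> cell x" if "x \<in> X" for x
    using that XD unfolding cell_def by auto
  have sub: "cell x \<subseteq> cball x (4*w)" if "x \<in> X" for x
  proof
    fix p assume p: "p \<in> cell x"
    hence "p \<in> D" unfolding cell_def by auto
    then obtain x' where "x' \<in> X" "dist p x' < 4*w" using net by blast
    with p show "p \<in> cball x (4*w)" unfolding cell_def by (force simp: dist_commute)
  qed
  have union: "\<Union>P = D"
  proof
    show "\<Union>P \<subseteq> D" unfolding P_def cell_def by auto
    show "D \<subseteq> \<Union>P"
    proof
      fix p assume p: "p \<in> D"
      have "X \<noteq> {}" using net[OF p] by auto
      then obtain x where x: "x \<in> X" "\<forall>x'\<in>X. dist p x \<le> dist p x'"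
        using finX ex_min_if_finite[of "(\<lambda>x. dist p x) ` X"] 
        by (metis (no_types, lifting) arg_min_if_finite(1) arg_min_least finX)
      hence "p \<in> cell x" using p unfolding cell_def by auto
      thus "p \<in> \<Union>P" using x unfolding P_def by auto
    qed
  qed
  have disj: "interior C \<inter> interior C' = {}" if CP: "C \<in> P" "C' \<in> P" "C \<noteq> C'" for C C'
  proof -
    obtain x x' where xx: "x \<in> X" "x' \<in> X" "C = cell x" "C' = cell x'"
      using CP(1,2) unfolding P_def by blast
    hence "x \<noteq> x'" using CP(3) by auto
    have "C \<inter> C' \<subseteq> {p. inner (2 *\<^sub>R (x' - x)) p = norm x' ^ 2 - norm x ^ 2}"
    proof
      fix p assume "p \<in> C \<inter> C'"
      hence "dist p x = dist p x'" using xx unfolding cell_def by (auto intro: antisym)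
      hence "p \<in> {p. dist p x \<le> dist p x'}" "p \<in> {p. dist p x' \<le> dist p x}" by auto
      hence "inner (2 *\<^sub>R (x' - x)) p \<le> norm x' ^ 2 - norm x ^ 2"
            "inner (2 *\<^sub>R (x - x')) p \<le> norm x ^ 2 - norm x' ^ 2"
        unfolding hs by auto
      thus "p \<in> {p. inner (2 *\<^sub>R (x' - x)) p = norm x' ^ 2 - norm x ^ 2}"
        by (auto simp: inner_diff_left)
    qed
    hence "interior (C \<inter> C') \<subseteq> interior {p. inner (2 *\<^sub>R (x' - x)) p = norm x' ^ 2 - norm x ^ 2}"
      by (rule interior_mono)
    moreover have "2 *\<^sub>R (x' - x) \<noteq> 0" using \<open>x \<noteq> x'\<close> by simp
    ultimately have "interior (C \<inter> C') = {}"
      using interior_hyperplane[of "2 *\<^sub>R (x' - x)" "norm x' ^ 2 - norm x ^ 2"] by blast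
    thus ?thesis by (simp add: interior_Int)
  qed
  have area: "measure lebesgue (cell x) \<ge> w\<^sup>2 / 8" if x: "x \<in> X" for x
  proof -
    obtain z where z: "dist z x \<le> w/2" "dist c z \<le> \<rho> - w/2"
    proof (cases "dist c x \<le> \<rho> - w/2")
      case True thus ?thesis using that[of x] assms by auto
    next
      case False
      define z where "z = c + ((\<rho> - w/2) / dist c x) *\<^sub>R (x - c)"
      have dx: "dist c x > 0" using False assms by auto
      have dxr: "dist c x \<le> \<rho>" using x XD D_def by auto
      have "dist c z = \<rho> - w/2" using dx assms
        by (simp add: z_def dist_norm norm_minus_commute)
      moreover have "dist z x = dist c x - (\<rho> - w/2)"
      proof -
        have "x - z = (1 - (\<rho> - w/2) / dist c x) *\<^sub>R (x - c)" by (simp add: z_def algebra_simps)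
        moreover have "0 \<le> 1 - (\<rho> - w/2) / dist c x" using False dx by (simp add: field_simps)
        ultimately have "norm (x - z) = (1 - (\<rho> - w/2) / dist c x) * norm (x - c)"
          by simp
        moreover have "norm (x - z) = dist z x" "norm (x - c) = dist c x"
          by (simp_all add: dist_norm norm_minus_commute)
        ultimately have "dist z x = (1 - (\<rho> - w/2) / dist c x) * dist c x" by simp
        moreover have "(1 - (\<rho> - w/2) / dist c x) * dist c x = dist c x - (\<rho> - w/2)"
        proof -
          have "(\<rho> - w/2) / dist c x * dist c x = \<rho> - w/2" using dx by simp
          thus ?thesis by (simp only: left_diff_distrib mult_1)
        qed
        ultimately show ?thesis by simp
      qed
      ultimately show ?thesis using that[of z] dxr by auto
    qed
    have bs: "ball z (w/2) \<subseteq> cell x"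
    proof
      fix p assume "p \<in> ball z (w/2)"
      hence pz: "dist z p < w/2" by simp
      have px: "dist p x < w" using dist_triangle[of p x z] pz z by (simp add: dist_commute)
      have "p \<in> D" unfolding D_def using dist_triangle[of c p z] pz z by simp
      moreover have "dist p x \<le> dist p x'" if "x' \<in> X" for x'
      proof (cases "x' = x")
        case False
        have "2*w \<le> dist x x'" using Xsep[OF x that] False by auto
        also have "\<dots> \<le> dist p x + dist p x'" by (metis dist_commute dist_triangle)
        finally show ?thesis using px by simp
      qed simp
      ultimately show "p \<in> cell x" unfolding cell_def by auto
    qed
    have "measure lborel (ball z (w/2)) = (w/2)^2 * pi"
      using circle_area[of "w/2" z] assms by simp
    hence "measure lebesgue (ball z (w/2)) = (w/2)^2 * pi" by simp
    moreover have "measure lebesgue (ball z (w/2)) \<le> measure lebesgue (cell x)"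
    proof (rule measure_mono_fmeasurable[OF bs])
      show "ball z (w / 2) \<in> sets lebesgue" by simp
      show "cell x \<in> fmeasurable lebesgue" by (rule lmeasurable_compact[OF compact])
    qed
    moreover have "w\<^sup>2 / 8 \<le> (w/2)^2 * pi" using pi_gt3 assms by (simp add: power2_eq_square)
    ultimately show ?thesis by linarith
  qed
  have "convex_cell_partition P D"
    unfolding convex_cell_partition_def P_def
    using finX union disj convex compact xin unfolding P_def by fastforce
  moreover have "diameter C \<le> 8 * w \<and> measure lebesgue C \<ge> w\<^sup>2 / 8" if CP: "C \<in> P" for C
  proof -
    obtain x where x: "x \<in> X" "C = cell x" using CP P_def by auto
    have "diameter C \<le> diameter (cball x (4*w))" using sub[OF x(1)] x(2) by (intro diameter_subset) auto
    thus ?thesis using assms area x by auto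
  qed
  ultimately show ?thesis unfolding D_def by auto
qed

end
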